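(* Let $\mathbf A,\mathbf B\in\mathbb C^{n\times n}$, $k=\operatorname{Ind}\mathbf A$, $r=\operatorname{rank}\mathbf A^{k}$, and for $l\ge 0$ let $\check{\mathbf B}^{(l)}=\mathbf B\mathbf A^{l}=(\check b^{(l)}_{ij})$ with $i$-th row $\check{\mathbf b}^{(l)}_{i.}$ (so $\check{\mathbf B}^{(0)}=\mathbf B=(b_{ij})$). Let \[\mathbf X(t)=\mathbf B\mathbf A^{D}+\sum_{s=1}^{k}\frac{(-1)^{s-1}}{s!}\left(\mathbf B\mathbf A^{s-1}-\mathbf B\mathbf A^{s}\mathbf A^{D}\right)t^{s}\] (the partial solution of $\mathbf X'+\mathbf X\mathbf A=\mathbf B$). Writing $\Delta=\sum_{\alpha\in I_{r,n}}\left|(\mathbf A^{k+1})^{\alpha}_{\alpha}\right|$ and $N_{ij}(l)=\sum_{\alpha\in I_{r,n}\{j\}}\left|\left(\mathbf A^{k+1}_{j.}(\check{\mathbf b}^{(l)}_{i.})\right)^{\alpha}_{\alpha}\right|$, the entries of $\mathbf X(t)=(x_{ij})$ are, for all $i,j=1,\dots,n$, \[x_{ij}=\frac{N_{ij}(k)}{\Delta}+\sum_{s=1}^{k}\frac{(-1)^{s-1}}{s!}\left(\check b^{(s-1)}_{ij}-\frac{N_{ij}(k+s)}{\Delta}\right)t^{s}.\]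
   Context: $\operatorname{Ind}\mathbf A$ is the smallest nonnegative $k$ with $\operatorname{rank}\mathbf A^{k+1}=\operatorname{rank}\mathbf A^{k}$; the Drazin inverse $\mathbf A^{D}$ is the unique $\mathbf X$ with $\mathbf A^{k+1}\mathbf X=\mathbf A^{k}$, $\mathbf X\mathbf A\mathbf X=\mathbf X$, $\mathbf A\mathbf X=\mathbf X\mathbf A$. $\mathbf M_{j.}(\mathbf c)$ denotes $\mathbf M$ with its $j$-th row replaced by the row vector $\mathbf c$. $I_{r,n}$ is the set of strictly increasing sequences of $r$ elements of $\{1,\dots,n\}$, $I_{r,n}\{j\}=\{\alpha\in I_{r,n}:j\in\alpha\}$, $\mathbf M^{\alpha}_{\alpha}$ is the principal submatrix indexed by $\alpha$, $|\cdot|$ is the determinant. *)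

theory Defs
  imports "Jordan_Normal_Form.DL_Rank" "Jordan_Normal_Form.DL_Submatrix" "Jordan_Normal_Form.Determinant"
begin

definition crank :: "nat \<Rightarrow> complex mat \<Rightarrow> nat" where
  "crank n M = vec_space.rank n M"

definition mat_ind :: "nat \<Rightarrow> complex mat \<Rightarrow> nat" where
  "mat_ind n A = (LEAST k. crank n (A ^\<^sub>m (k+1)) = crank n (A ^\<^sub>m k))"

definition is_drazin_inv :: "nat \<Rightarrow> complex mat \<Rightarrow> complex mat \<Rightarrow> bool" where
  "is_drazin_inv n A X \<longleftrightarrow> X \<in> carrier_mat n n \<and>
     (let k = mat_ind n A in A ^\<^sub>m (k+1) * X = A ^\<^sub>m k) \<and> X * A * X = X \<and> A * X = X * A"

definition replace_row :: "complex mat \<Rightarrow> nat \<Rightarrow> complex vec \<Rightarrow> complex mat" where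
  "replace_row M j c = mat (dim_row M) (dim_col M) (\<lambda>(i,l). if i = j then c $ l else M $$ (i,l))"

text \<open>Principal minor indexed by the index set alpha (strictly increasing sequences = subsets).\<close>
definition pminor :: "complex mat \<Rightarrow> nat set \<Rightarrow> complex" where
  "pminor M \<alpha> = det (submatrix M \<alpha> \<alpha>)"

text \<open>I_{r,n} (0-based indices) and I_{r,n}{j}.\<close>
definition Irn :: "nat \<Rightarrow> nat \<Rightarrow> nat set set" where
  "Irn r n = {\<alpha>. \<alpha> \<subseteq> {0..<n} \<and> card \<alpha> = r}"

definition Irnj :: "nat \<Rightarrow> nat \<Rightarrow> nat \<Rightarrow> nat set set" where
  "Irnj r n j = {\<alpha> \<in> Irn r n. j \<in> \<alpha>}"

definition Xsol :: "nat \<Rightarrow> nat \<Rightarrow> complex mat \<Rightarrow> complex mat \<Rightarrow> complex mat \<Rightarrow> complex \<Rightarrow> complex mat" where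
  "Xsol n k A B AD t = mat n n (\<lambda>(i,j).
      (B * AD) $$ (i,j) +
      (\<Sum>s=1..k. ((-1)^(s-1) / of_nat (fact s)) *
          ((B * A ^\<^sub>m (s-1)) $$ (i,j) - (B * A ^\<^sub>m s * AD) $$ (i,j)) * t^s))"

end

theory Submission
  imports Defs
begin

lemma pick_image: assumes "finite S" shows "pick S ` {0..<card S} = S"
proof -
  have sub: "pick S ` {0..<card S} \<subseteq> S" using pick_in_set by auto
  have "inj_on (pick S) {0..<card S}"
    by (intro inj_onI, metis atLeastLessThan_iff linorder_neqE_nat pick_mono less_irrefl)
  hence "card (pick S ` {0..<card S}) = card S" by (simp add: card_image)
  thus ?thesis using sub assms by (simp add: card_subset_eq)
qed

lemma pick_inj: assumes "i < card S" "j < card S" "pick S i = pick S j" shows "i = j"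
  using assms by (metis linorder_neqE_nat pick_mono less_irrefl)

definition cbh :: "nat \<Rightarrow> nat set \<Rightarrow> (nat \<Rightarrow> nat) \<Rightarrow> nat \<Rightarrow> nat" where
  "cbh r \<alpha> \<tau> = (\<lambda>a. if a < r then pick \<alpha> (\<tau> a) else a)"

lemma cbh_decomp:
  assumes injf: "inj_on f {0..<r}" and fl: "\<And>i. i < r \<Longrightarrow> f i < n" and fo: "\<And>i. \<not> i < r \<Longrightarrow> f i = i"
  shows "\<exists>\<alpha> \<tau>. \<alpha> \<in> Irn r n \<and> \<tau> permutes {0..<r} \<and> f = cbh r \<alpha> \<tau>"
proof -
  define \<alpha> where "\<alpha> = f ` {0..<r}"
  have ca: "card \<alpha> = r" unfolding \<alpha>_def using card_image[OF injf] by simp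
  have aV: "\<alpha> \<subseteq> {0..<n}" unfolding \<alpha>_def using fl by auto
  have fina: "finite \<alpha>" unfolding \<alpha>_def by simp
  have fa: "i < r \<Longrightarrow> f i \<in> \<alpha>" for i unfolding \<alpha>_def by simp
  define \<tau> where "\<tau> = (\<lambda>a. if a < r then card {x\<in>\<alpha>. x < f a} else a)"
  have pt: "pick \<alpha> (\<tau> a) = f a" if a: "a < r" for a
  proof -
    have "\<tau> a = card {x\<in>\<alpha>. x < f a}" unfolding \<tau>_def using a by simp
    thus ?thesis using pick_card_in_set[OF fa[OF a]] by simp
  qed
  have tlt: "\<tau> a < r" if a: "a < r" for a
  proof -
    have "{x\<in>\<alpha>. x < f a} \<subset> \<alpha>" using fa[OF a] by auto
    hence "card {x\<in>\<alpha>. x < f a} < card \<alpha>" using fina psubset_card_mono by blast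
    thus ?thesis unfolding \<tau>_def using a ca by simp
  qed
  have "\<tau> permutes {0..<r}"
  proof (rule inj_on_nat_permutes)
    show "inj_on \<tau> {0..<r}"
    proof (rule inj_onI)
      fix a b assume a: "a \<in> {0..<r}" and b: "b \<in> {0..<r}" and e: "\<tau> a = \<tau> b"
      have ar: "a < r" using a by simp
      have br: "b < r" using b by simp
      have "f a = pick \<alpha> (\<tau> a)" using pt[OF ar] by (rule sym)
      also have "\<dots> = pick \<alpha> (\<tau> b)" using e by (rule arg_cong)
      also have "\<dots> = f b" using pt[OF br] .
      finally have "f a = f b" .
      thus "a = b" using injf a b unfolding inj_on_def by blast
    qed
    show "\<tau> \<in> {0..<r} \<rightarrow> {0..<r}" using tlt by simp
    show "\<And>i. i \<notin> {0..<r} \<Longrightarrow> \<tau> i = i" unfolding \<tau>_def by simp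
  qed simp
  moreover have "\<alpha> \<in> Irn r n" unfolding Irn_def using aV ca by simp
  moreover have "f = cbh r \<alpha> \<tau>"
  proof
    fix i show "f i = cbh r \<alpha> \<tau> i"
    proof (cases "i < r")
      case True thus ?thesis unfolding cbh_def using pt[OF True] by simp
    next
      case False thus ?thesis unfolding cbh_def using fo[OF False] by simp
    qed
  qed
  ultimately show ?thesis by blast
qed

lemma cbh_props:
  assumes a: "\<alpha> \<in> Irn r n" and t: "\<tau> permutes {0..<r}"
  shows "inj_on (cbh r \<alpha> \<tau>) {0..<r}" "\<And>i. i < r \<Longrightarrow> cbh r \<alpha> \<tau> i < n" "\<And>i. \<not> i < r \<Longrightarrow> cbh r \<alpha> \<tau> i = i"
proof -
  have ca: "card \<alpha> = r" and aV: "\<alpha> \<subseteq> {0..<n}" using a unfolding Irn_def by auto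
  have tl: "i < r \<Longrightarrow> \<tau> i < r" for i using permutes_in_image[OF t, of i] by simp
  show "inj_on (cbh r \<alpha> \<tau>) {0..<r}"
  proof (rule inj_onI)
    fix a b assume a: "a \<in> {0..<r}" and b: "b \<in> {0..<r}" and e: "cbh r \<alpha> \<tau> a = cbh r \<alpha> \<tau> b"
    have ar: "a < r" using a by simp
    have br: "b < r" using b by simp
    have "pick \<alpha> (\<tau> a) = pick \<alpha> (\<tau> b)" using e ar br unfolding cbh_def by simp
    hence "\<tau> a = \<tau> b" using pick_inj[of "\<tau> a" \<alpha> "\<tau> b"] tl[OF ar] tl[OF br] ca by simp
    thus "a = b" using permutes_inj[OF t] unfolding inj_def by blast
  qed
  show "\<And>i. i < r \<Longrightarrow> cbh r \<alpha> \<tau> i < n"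
  proof -
    fix i assume i: "i < r"
    have "pick \<alpha> (\<tau> i) \<in> \<alpha>" using pick_in_set[of "\<tau> i" \<alpha>] tl[OF i] ca by simp
    thus "cbh r \<alpha> \<tau> i < n" unfolding cbh_def using i aV by auto
  qed
  show "\<And>i. \<not> i < r \<Longrightarrow> cbh r \<alpha> \<tau> i = i" unfolding cbh_def by simp
qed

lemma cbh_unique:
  assumes a: "\<alpha> \<in> Irn r n" and t: "\<tau> permutes {0..<r}" and b: "\<beta> \<in> Irn r n" and s: "\<sigma> permutes {0..<r}"
    and e: "cbh r \<alpha> \<tau> = cbh r \<beta> \<sigma>"
  shows "\<alpha> = \<beta> \<and> \<tau> = \<sigma>"
proof -
  have ca: "card \<alpha> = r" and cb: "card \<beta> = r" using a b unfolding Irn_def by auto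
  have fa: "finite \<alpha>" and fb: "finite \<beta>" using a b unfolding Irn_def by (auto intro: finite_subset)
  have e2: "pick \<alpha> (\<tau> a) = pick \<beta> (\<sigma> a)" if ar: "a < r" for a
    using fun_cong[OF e, of a] ar unfolding cbh_def by simp
  have "\<alpha> = pick \<alpha> ` {0..<r}" using pick_image[OF fa] ca by simp
  also have "\<dots> = pick \<alpha> ` (\<tau> ` {0..<r})" using permutes_image[OF t] by simp
  also have "\<dots> = (\<lambda>a. pick \<alpha> (\<tau> a)) ` {0..<r}" by (simp add: image_image)
  also have "\<dots> = (\<lambda>a. pick \<beta> (\<sigma> a)) ` {0..<r}" by (rule image_cong[OF refl], simp add: e2)
  also have "\<dots> = pick \<beta> ` (\<sigma> ` {0..<r})" by (simp add: image_image)
  also have "\<dots> = \<beta>" using permutes_image[OF s] pick_image[OF fb] cb by simp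
  finally have ab: "\<alpha> = \<beta>" .
  have "\<tau> = \<sigma>"
  proof
    fix x show "\<tau> x = \<sigma> x"
    proof (cases "x < r")
      case True
      have ta: "\<tau> x < r" using permutes_in_image[OF t, of x] True by simp
      have tb: "\<sigma> x < r" using permutes_in_image[OF s, of x] True by simp
      show ?thesis using pick_inj[of "\<tau> x" \<alpha> "\<sigma> x"] e2[OF True] ab ta tb ca by simp
    next
      case False thus ?thesis using permutes_not_in[OF t] permutes_not_in[OF s] by simp
    qed
  qed
  thus ?thesis using ab by simp
qed
lemma card_sub_alpha: "\<alpha> \<subseteq> {0..<n} \<Longrightarrow> card \<alpha> = r \<Longrightarrow> card {i. i < n \<and> i \<in> \<alpha>} = r"
proof -
  assume "\<alpha> \<subseteq> {0..<n}" "card \<alpha> = r"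
  moreover have "{i. i < n \<and> i \<in> \<alpha>} = \<alpha>" using \<open>\<alpha> \<subseteq> {0..<n}\<close> by auto
  ultimately show ?thesis by simp
qed
lemma card_UNIV_lt: "card {i. i < n \<and> i \<in> (UNIV::nat set)} = n" by simp

lemma sub_rows_carrier: assumes "F \<in> carrier_mat n m" "\<alpha> \<subseteq> {0..<n}" "card \<alpha> = r"
  shows "submatrix F \<alpha> UNIV \<in> carrier_mat r m"
proof -
  have d: "dim_row F = n" "dim_col F = m" using assms by auto
  show ?thesis by (rule carrier_matI, unfold dim_submatrix d card_sub_alpha[OF assms(2,3)] card_UNIV_lt, rule refl, rule refl)
qed

lemma sub_cols_carrier: assumes "G \<in> carrier_mat m n" "\<alpha> \<subseteq> {0..<n}" "card \<alpha> = r"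
  shows "submatrix G UNIV \<alpha> \<in> carrier_mat m r"
proof -
  have d: "dim_row G = m" "dim_col G = n" using assms by auto
  show ?thesis by (rule carrier_matI, unfold dim_submatrix d card_sub_alpha[OF assms(2,3)] card_UNIV_lt, rule refl, rule refl)
qed

lemma sub_rows_index: assumes "F \<in> carrier_mat n m" "\<alpha> \<subseteq> {0..<n}" "card \<alpha> = r" "i < r" "j < m"
  shows "submatrix F \<alpha> UNIV $$ (i,j) = F $$ (pick \<alpha> i, j)"
proof -
  have d: "dim_row F = n" "dim_col F = m" using assms by auto
  have "submatrix F \<alpha> UNIV $$ (i,j) = F $$ (pick \<alpha> i, pick UNIV j)"
    by (rule submatrix_index, unfold d card_sub_alpha[OF assms(2,3)] card_UNIV_lt, fact, fact)
  thus ?thesis unfolding pick_UNIV .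
qed

lemma sub_cols_index: assumes "G \<in> carrier_mat m n" "\<alpha> \<subseteq> {0..<n}" "card \<alpha> = r" "i < m" "j < r"
  shows "submatrix G UNIV \<alpha> $$ (i,j) = G $$ (i, pick \<alpha> j)"
proof -
  have d: "dim_row G = m" "dim_col G = n" using assms by auto
  have "submatrix G UNIV \<alpha> $$ (i,j) = G $$ (pick UNIV i, pick \<alpha> j)"
    by (rule submatrix_index, unfold d card_sub_alpha[OF assms(2,3)] card_UNIV_lt, fact, fact)
  thus ?thesis unfolding pick_UNIV .
qed

lemma pick_lt: assumes "\<alpha> \<subseteq> {0..<n}" "card \<alpha> = r" "i < r" shows "pick \<alpha> i < n"
  using pick_in_set[of i \<alpha>] assms by auto
lemma card_lt_UNIV: "card {j. j < m \<and> j \<in> (UNIV::nat set)} = m" by simp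

lemma submatrix_mult:
  assumes F: "F \<in> carrier_mat n m" and G: "G \<in> carrier_mat m p"
  shows "submatrix (F*G) I J = submatrix F I UNIV * submatrix G UNIV J"
proof (rule eq_matI)
  show "dim_row (submatrix (F*G) I J) = dim_row (submatrix F I UNIV * submatrix G UNIV J)"
    using F G by (simp add: dim_submatrix)
  show "dim_col (submatrix (F*G) I J) = dim_col (submatrix F I UNIV * submatrix G UNIV J)"
    using F G by (simp add: dim_submatrix)
  fix a b assume a: "a < dim_row (submatrix F I UNIV * submatrix G UNIV J)"
    and b: "b < dim_col (submatrix F I UNIV * submatrix G UNIV J)"
  hence a': "a < card {i. i<n \<and> i\<in>I}" and b': "b < card{j. j<p \<and> j\<in>J}" using F G by (simp_all add: dim_submatrix)
  have pa: "pick I a < n" using pick_le a' by blast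
  have pb: "pick J b < p" using pick_le b' by blast
  have "submatrix (F*G) I J $$ (a,b) = (F*G) $$ (pick I a, pick J b)"
    by (rule submatrix_index, insert a' b' F G, auto)
  also have "\<dots> = (\<Sum>q<m. F $$ (pick I a, q) * G $$ (q, pick J b))"
    using F G pa pb by (simp add: scalar_prod_def atLeast0LessThan)
  also have "\<dots> = (submatrix F I UNIV * submatrix G UNIV J) $$ (a,b)"
    using F G a' b' by (simp add: dim_submatrix scalar_prod_def atLeast0LessThan submatrix_index pick_UNIV)
  finally show "submatrix (F*G) I J $$ (a,b) = (submatrix F I UNIV * submatrix G UNIV J) $$ (a,b)" .
qed


lemma cauchy_binet:
  fixes F G :: "'a::comm_ring_1 mat"
  assumes F: "F \<in> carrier_mat n r" and G: "G \<in> carrier_mat r n"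
  shows "det (G*F) = (\<Sum>\<alpha>\<in>Irn r n. det (submatrix G UNIV \<alpha>) * det (submatrix F \<alpha> UNIV))"
proof -
  let ?U = "{0..<r}" let ?V = "{0..<n}"
  let ?Fs = "{f. (\<forall>i\<in>?U. f i \<in> ?V) \<and> (\<forall>i. i \<notin> ?U \<longrightarrow> f i = i)}"
  let ?Inj = "{f\<in>?Fs. inj_on f ?U}"
  let ?P = "{p. p permutes ?U}"
  let ?S = "Sigma (Irn r n) (\<lambda>_. ?P)"
  let ?h = "case_prod (cbh r)"
  let ?g = "\<lambda>f. (\<Prod>a\<in>?U. G$$(a,f a)) * det (mat\<^sub>r r r (\<lambda>a. row F (f a)))"
  have finFs: "finite ?Fs" by (rule finite_bounded_functions, auto)
  have finI: "finite (Irn r n)" unfolding Irn_def by (rule finite_subset[of _ "Pow {0..<n}"], auto)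
  have "det (G*F) = (\<Sum>f\<in>?Fs. det (mat\<^sub>r r r (\<lambda>a. G$$(a,f a) \<cdot>\<^sub>v row F (f a))))"
    unfolding mat_mul_finsum_alt[OF G F]
  proof (rule det_linear_rows_sum)
    show "(\<lambda>i k. G $$ (i, k) \<cdot>\<^sub>v row F k) \<in> {0..<r} \<rightarrow> {0..<n} \<rightarrow> carrier_vec r"
      using F by auto
  qed simp
  also have "\<dots> = sum ?g ?Fs"
  proof (rule sum.cong[OF refl])
    fix f assume f: "f \<in> ?Fs"
    show "det (mat\<^sub>r r r (\<lambda>a. G$$(a,f a) \<cdot>\<^sub>v row F (f a))) = ?g f"
    proof (rule det_rows_mul)
      show "(\<lambda>a. row F (f a)) \<in> {0..<r} \<rightarrow> carrier_vec r"
      proof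
        fix a assume "a \<in> {0..<r}"
        hence "f a < n" using f by auto
        thus "row F (f a) \<in> carrier_vec r" using F by auto
      qed
    qed
  qed
  also have "\<dots> = sum ?g ?Inj + sum ?g (?Fs - ?Inj)"
  proof -
    have sub: "?Inj \<subseteq> ?Fs" by (rule Collect_subset)
    show ?thesis using sum.subset_diff[OF sub finFs, of ?g] by (simp only: add.commute)
  qed
  also have "sum ?g (?Fs - ?Inj) = 0"
  proof (rule sum.neutral, rule ballI)
    fix f assume f: "f \<in> ?Fs - ?Inj"
    hence "\<not> inj_on f ?U" by blast
    then obtain i j where ij: "f i = f j" "i \<noteq> j" "i < r" "j < r"
      unfolding inj_on_def by auto
    have fi: "f i < n" using f ij by auto
    have "det (mat\<^sub>r r r (\<lambda>a. row F (f a))) = 0"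
    proof (rule det_identical_rows[OF _ ij(2-4)])
      show "mat\<^sub>r r r (\<lambda>a. row F (f a)) \<in> carrier_mat r r" by simp
      show "row (mat\<^sub>r r r (\<lambda>a. row F (f a))) i = row (mat\<^sub>r r r (\<lambda>a. row F (f a))) j"
        using ij F by simp
    qed
    thus "?g f = 0" by simp
  qed
  also have "?Inj = ?h ` ?S"
  proof (intro equalityI subsetI)
    fix f assume f: "f \<in> ?Inj"
    have injf: "inj_on f ?U" using f by simp
    have fl: "\<And>i. i < r \<Longrightarrow> f i < n" using f by auto
    have fo: "\<And>i. \<not> i < r \<Longrightarrow> f i = i" using f by auto
    obtain \<alpha> \<tau> where "\<alpha> \<in> Irn r n" "\<tau> permutes ?U" "f = cbh r \<alpha> \<tau>"
      using cbh_decomp[OF injf fl fo] by blast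
    thus "f \<in> ?h ` ?S" by (intro image_eqI[of _ _ "(\<alpha>,\<tau>)"]) auto
  next
    fix f assume "f \<in> ?h ` ?S"
    then obtain \<alpha> \<tau> where a: "\<alpha> \<in> Irn r n" and t: "\<tau> permutes ?U" and fe: "f = cbh r \<alpha> \<tau>" by auto
    note pr = cbh_props[OF a t]
    show "f \<in> ?Inj" using pr unfolding fe by auto
  qed
  also have "sum ?g (?h ` ?S) = sum (?g \<circ> ?h) ?S"
  proof (rule sum.reindex, rule inj_onI)
    fix x y assume x: "x \<in> ?S" and y: "y \<in> ?S" and e: "?h x = ?h y"
    obtain \<alpha> \<tau> where xe: "x = (\<alpha>,\<tau>)" by fastforce
    obtain \<beta> \<sigma> where ye: "y = (\<beta>,\<sigma>)" by fastforce
    show "x = y" using cbh_unique[of \<alpha> r n \<tau> \<beta> \<sigma>] x y e unfolding xe ye by simp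
  qed
  also have "\<dots> = (\<Sum>\<alpha>\<in>Irn r n. \<Sum>\<tau>\<in>?P. ?g (cbh r \<alpha> \<tau>))"
  proof -
    have fP: "\<forall>\<alpha>\<in>Irn r n. finite ?P" by (simp add: finite_permutations)
    have eqf: "?g \<circ> ?h = (\<lambda>(\<alpha>,\<tau>). ?g (cbh r \<alpha> \<tau>))" by (rule ext) (simp add: split_beta)
    show ?thesis unfolding eqf by (rule sum.Sigma[OF finI fP, symmetric])
  qed
  also have "\<dots> = (\<Sum>\<alpha>\<in>Irn r n. det (submatrix G UNIV \<alpha>) * det (submatrix F \<alpha> UNIV))"
  proof (rule sum.cong[OF refl])
    fix \<alpha> assume a: "\<alpha> \<in> Irn r n"
    have ca: "card \<alpha> = r" and aV: "\<alpha> \<subseteq> ?V" using a unfolding Irn_def by auto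
    have Fa: "submatrix F \<alpha> UNIV \<in> carrier_mat r r" by (rule sub_rows_carrier[OF F aV ca])
    have Ga: "submatrix G UNIV \<alpha> \<in> carrier_mat r r" by (rule sub_cols_carrier[OF G aV ca])
    have "(\<Sum>\<tau>\<in>?P. ?g (cbh r \<alpha> \<tau>)) = (\<Sum>\<tau>\<in>?P. (signof \<tau> * (\<Prod>a\<in>?U. submatrix G UNIV \<alpha> $$ (a, \<tau> a))) * det (submatrix F \<alpha> UNIV))"
    proof (rule sum.cong[OF refl])
      fix \<tau> assume "\<tau> \<in> ?P"
      hence t: "\<tau> permutes ?U" by simp
      have tl: "a < r \<Longrightarrow> \<tau> a < r" for a using permutes_in_image[OF t, of a] by simp
      have hh: "a < r \<Longrightarrow> cbh r \<alpha> \<tau> a = pick \<alpha> (\<tau> a)" for a unfolding cbh_def by simp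
      have m: "mat\<^sub>r r r (\<lambda>a. row F (cbh r \<alpha> \<tau> a)) = mat r r (\<lambda>(i,j). submatrix F \<alpha> UNIV $$ (\<tau> i, j))"
      proof (rule eq_matI)
        fix i j assume i: "i < dim_row (mat r r (\<lambda>(i,j). submatrix F \<alpha> UNIV $$ (\<tau> i, j)))"
          and j: "j < dim_col (mat r r (\<lambda>(i,j). submatrix F \<alpha> UNIV $$ (\<tau> i, j)))"
        hence i': "i < r" and j': "j < r" by auto
        have pl: "pick \<alpha> (\<tau> i) < n" by (rule pick_lt[OF aV ca tl[OF i']])
        have "mat\<^sub>r r r (\<lambda>a. row F (cbh r \<alpha> \<tau> a)) $$ (i,j) = row F (pick \<alpha> (\<tau> i)) $ j"
          using i' j' hh[OF i'] by simp
        also have "\<dots> = F $$ (pick \<alpha> (\<tau> i), j)" using F j' pl by simp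
        also have "\<dots> = mat r r (\<lambda>(i,j). submatrix F \<alpha> UNIV $$ (\<tau> i, j)) $$ (i,j)"
          using sub_rows_index[OF F aV ca tl[OF i'] j'] i' j' by simp
        finally show "mat\<^sub>r r r (\<lambda>a. row F (cbh r \<alpha> \<tau> a)) $$ (i,j) = mat r r (\<lambda>(i,j). submatrix F \<alpha> UNIV $$ (\<tau> i, j)) $$ (i,j)" .
      qed simp_all
      have d: "det (mat\<^sub>r r r (\<lambda>a. row F (cbh r \<alpha> \<tau> a))) = signof \<tau> * det (submatrix F \<alpha> UNIV)"
        unfolding m by (rule det_permute_rows[OF Fa t])
      have p: "(\<Prod>a\<in>?U. G$$(a, cbh r \<alpha> \<tau> a)) = (\<Prod>a\<in>?U. submatrix G UNIV \<alpha> $$ (a, \<tau> a))"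
      proof (rule prod.cong[OF refl])
        fix a assume "a \<in> ?U" hence a: "a < r" by simp
        show "G$$(a, cbh r \<alpha> \<tau> a) = submatrix G UNIV \<alpha> $$ (a, \<tau> a)"
          using sub_cols_index[OF G aV ca a tl[OF a]] hh[OF a] by simp
      qed
      show "?g (cbh r \<alpha> \<tau>) = (signof \<tau> * (\<Prod>a\<in>?U. submatrix G UNIV \<alpha> $$ (a, \<tau> a))) * det (submatrix F \<alpha> UNIV)"
        unfolding d p by (simp only: ac_simps)
    qed
    also have "\<dots> = det (submatrix G UNIV \<alpha>) * det (submatrix F \<alpha> UNIV)"
      unfolding det_def'[OF Ga] sum_distrib_right by simp
    finally show "(\<Sum>\<tau>\<in>?P. ?g (cbh r \<alpha> \<tau>)) = det (submatrix G UNIV \<alpha>) * det (submatrix F \<alpha> UNIV)" .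
  qed
  finally show ?thesis by simp
qed


lemma rank_factor:
  fixes Ak :: "'a::field mat"
  assumes Ak: "Ak \<in> carrier_mat n n"
  defines "r \<equiv> vec_space.rank n Ak"
  shows "\<exists>F G0 E. F \<in> carrier_mat n r \<and> G0 \<in> carrier_mat r n \<and> E \<in> carrier_mat n r \<and>
     Ak = F * G0 \<and> F = Ak * E \<and> (\<forall>w \<in> carrier_vec r. F *\<^sub>v w = 0\<^sub>v n \<longrightarrow> w = 0\<^sub>v r)"
proof -
  interpret vs: vec_space "TYPE('a)" n .
  have e: "{} \<subseteq> carrier_vec n \<and> vs.lin_indpt {}"
    by (metis (no_types) empty_subsetI vs.fin_dim vs.finite_basis_exists vs.subset_li_is_li vec_vs vectorspace.basis_def)
  obtain S where fS: "finite S" and mS: "maximal S (\<lambda>T. T \<subseteq> set (cols Ak) \<and> vs.lin_indpt T)"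
    using maximal_exists_superset[of "set (cols Ak)" "\<lambda>T. T \<subseteq> set (cols Ak) \<and> vs.lin_indpt T" "{}"] e by auto
  have rS: "r = card S" unfolding r_def by (rule vs.rank_card_indpt[OF Ak mS])
  have SAk: "S \<subseteq> set (cols Ak)" and liS: "vs.lin_indpt S" using mS unfolding maximal_def by auto
  have colsC: "set (cols Ak) \<subseteq> carrier_vec n" using Ak cols_dim by blast
  have SC: "S \<subseteq> carrier_vec n" using SAk colsC by blast
  obtain xs where xs: "set xs = S" "distinct xs" using finite_distinct_list[OF fS] by blast
  have lxs: "length xs = r" using xs rS distinct_card by metis
  define F where "F = mat_of_cols n xs"
  have F: "F \<in> carrier_mat n r" unfolding F_def lxs[symmetric] by simp
  have cF: "cols F = xs" unfolding F_def using xs SC by simp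
  have sF: "set (cols F) = S" using cF xs by simp
  have dF: "distinct (cols F)" using cF xs by simp
  have inj: "\<forall>w \<in> carrier_vec r. F *\<^sub>v w = 0\<^sub>v n \<longrightarrow> w = 0\<^sub>v r"
  proof (intro ballI impI)
    fix w assume w: "w \<in> carrier_vec r" and z: "F *\<^sub>v w = 0\<^sub>v n"
    show "w = 0\<^sub>v r"
    proof (rule ccontr)
      assume "w \<noteq> 0\<^sub>v r"
      hence "vs.lin_dep (set (cols F))" using vs.lin_depI[OF F w _ z dF] by simp
      thus False using liS sF by simp
    qed
  qed
  have ex_idx: "\<forall>c<r. \<exists>q<n. xs ! c = col Ak q"
  proof (intro allI impI)
    fix c assume c: "c < r"
    have "xs ! c \<in> set (cols Ak)" using SAk xs(1) c lxs nth_mem by blast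
    then obtain q where "q < length (cols Ak)" "cols Ak ! q = xs ! c" by (metis in_set_conv_nth)
    thus "\<exists>q<n. xs ! c = col Ak q" using Ak by auto
  qed
  then obtain idx where idx: "\<And>c. c < r \<Longrightarrow> idx c < n \<and> xs ! c = col Ak (idx c)" by metis
  define E where "E = mat n r (\<lambda>(q,c). if q = idx c then (1::'a) else 0)"
  have E: "E \<in> carrier_mat n r" unfolding E_def by simp
  have FE: "F = Ak * E"
  proof (rule eq_matI)
    fix i c assume i: "i < dim_row (Ak * E)" and c: "c < dim_col (Ak * E)"
    hence i': "i < n" and c': "c < r" using Ak E by auto
    have "(Ak * E) $$ (i,c) = (\<Sum>q = 0..<n. Ak $$ (i,q) * E $$ (q,c))"
      using Ak E i' c' by (simp add: scalar_prod_def)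
    also have "\<dots> = (\<Sum>q = 0..<n. if q = idx c then Ak $$ (i,q) else 0)"
      by (rule sum.cong[OF refl], insert c', auto simp: E_def)
    also have "\<dots> = Ak $$ (i, idx c)" using idx[OF c'] by simp
    also have "\<dots> = col Ak (idx c) $ i" using Ak i' idx[OF c'] by simp
    also have "\<dots> = F $$ (i,c)" using idx[OF c'] c' lxs i' xs SC unfolding F_def
      by (simp add: mat_of_cols_def)
    finally show "F $$ (i,c) = (Ak * E) $$ (i,c)" by simp
  qed (insert F Ak E, auto)
  have inspan: "\<forall>q<n. col Ak q \<in> vs.span S"
  proof (intro allI impI, rule ccontr)
    fix q assume q: "q < n" and ns: "col Ak q \<notin> vs.span S"
    have cq: "col Ak q \<in> set (cols Ak)" using q Ak by (metis cols_length cols_nth carrier_matD(2) nth_mem)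
    have cqC: "col Ak q \<in> carrier_vec n" using cq colsC by blast
    have nS: "col Ak q \<notin> S" using ns vs.in_own_span[OF SC] by blast
    have "vs.lin_indpt (S \<union> {col Ak q})" using vs.lin_dep_iff_in_span[OF SC liS cqC nS] ns by simp
    moreover have "S \<union> {col Ak q} \<subseteq> set (cols Ak)" using SAk cq by simp
    ultimately have "S \<union> {col Ak q} = S" using mS unfolding maximal_def by blast
    thus False using nS by blast
  qed
  have exg: "\<forall>q<n. \<exists>g. g \<in> carrier_vec r \<and> F *\<^sub>v g = col Ak q"
  proof (intro allI impI)
    fix q assume q: "q < n"
    obtain a where a: "vs.lincomb a S = col Ak q" using vs.finite_in_span[OF fS SC] inspan q by blast
    have "F *\<^sub>v vec r (\<lambda>i. a (col F i)) = vs.lincomb a (set (cols F))"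
      by (rule vs.mat_mult_eq_lincomb[OF F dF])
    thus "\<exists>g. g \<in> carrier_vec r \<and> F *\<^sub>v g = col Ak q" using a sF by (intro exI[of _ "vec r (\<lambda>i. a (col F i))"]) simp
  qed
  then obtain g where g: "\<And>q. q < n \<Longrightarrow> g q \<in> carrier_vec r \<and> F *\<^sub>v g q = col Ak q" by metis
  define G0 where "G0 = mat r n (\<lambda>(i,q). g q $ i)"
  have G0: "G0 \<in> carrier_mat r n" unfolding G0_def by simp
  have colG0: "q < n \<Longrightarrow> col G0 q = g q" for q using g[of q] unfolding G0_def by (auto intro!: eq_vecI)
  have FG: "Ak = F * G0"
  proof (rule eq_matI)
    fix i q assume i: "i < dim_row (F * G0)" and q: "q < dim_col (F * G0)"
    hence i': "i < n" and q': "q < n" using F G0 by auto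
    have "(F * G0) $$ (i,q) = (F *\<^sub>v col G0 q) $ i" using F G0 i' q' by simp
    also have "\<dots> = col Ak q $ i" using colG0[OF q'] g[OF q'] by simp
    also have "\<dots> = Ak $$ (i,q)" using Ak i' q' by simp
    finally show "Ak $$ (i,q) = (F * G0) $$ (i,q)" by simp
  qed (insert F Ak G0, auto)
  show ?thesis using F G0 E FG FE inj by blast
qed

lemma replace_row_carrier: "M \<in> carrier_mat n m \<Longrightarrow> replace_row M j w \<in> carrier_mat n m"
  unfolding replace_row_def by auto

lemma replace_row_mult:
  assumes F: "F \<in> carrier_mat n r" and G: "G \<in> carrier_mat r n" and U: "U \<in> carrier_mat m r"
    and i: "i < m"
  shows "replace_row (F*G) j (row (U*G) i) = replace_row F j (row U i) * G"
proof (rule eq_matI)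
  fix p l assume p: "p < dim_row (replace_row F j (row U i) * G)" and l: "l < dim_col (replace_row F j (row U i) * G)"
  hence p': "p < n" and l': "l < n" using F G by (auto simp: replace_row_def)
  have rr: "row (replace_row F j (row U i)) p = (if p = j then row U i else row F p)"
    by (rule eq_vecI, insert F U p', auto simp: replace_row_def)
  show "replace_row (F*G) j (row (U*G) i) $$ (p,l) = (replace_row F j (row U i) * G) $$ (p,l)"
    using F G U p' l' i rr by (auto simp: replace_row_def)
qed (insert F G, auto simp: replace_row_def)

lemma sub_replace_row:
  assumes F: "F \<in> carrier_mat n m" and aV: "\<alpha> \<subseteq> {0..<n}" and ca: "card \<alpha> = r" and j: "j \<in> \<alpha>"
  shows "submatrix (replace_row F j w) \<alpha> UNIV = replace_row (submatrix F \<alpha> UNIV) (card {x\<in>\<alpha>. x < j}) w"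
proof -
  have F': "replace_row F j w \<in> carrier_mat n m" by (rule replace_row_carrier[OF F])
  have S1: "submatrix (replace_row F j w) \<alpha> UNIV \<in> carrier_mat r m" by (rule sub_rows_carrier[OF F' aV ca])
  have S2: "submatrix F \<alpha> UNIV \<in> carrier_mat r m" by (rule sub_rows_carrier[OF F aV ca])
  have pj: "pick \<alpha> (card {x\<in>\<alpha>. x < j}) = j" by (rule pick_card_in_set[OF j])
  have fina: "finite \<alpha>" using aV finite_subset by blast
  have pl: "card {x\<in>\<alpha>. x < j} < r"
  proof -
    have "{x\<in>\<alpha>. x < j} \<subset> \<alpha>" using j by auto
    thus ?thesis using psubset_card_mono[OF fina] ca by blast
  qed
  show ?thesis
  proof (rule eq_matI)
    fix a b assume a: "a < dim_row (replace_row (submatrix F \<alpha> UNIV) (card {x\<in>\<alpha>. x < j}) w)"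
      and b: "b < dim_col (replace_row (submatrix F \<alpha> UNIV) (card {x\<in>\<alpha>. x < j}) w)"
    hence a': "a < r" and b': "b < m" using S2 by (auto simp: replace_row_def)
    have pa: "pick \<alpha> a < n" by (rule pick_lt[OF aV ca a'])
    have eq: "(pick \<alpha> a = j) = (a = card {x\<in>\<alpha>. x < j})"
      using pick_inj[of a \<alpha> "card {x\<in>\<alpha>. x < j}"] pj a' pl ca by auto
    show "submatrix (replace_row F j w) \<alpha> UNIV $$ (a,b) = replace_row (submatrix F \<alpha> UNIV) (card {x\<in>\<alpha>. x < j}) w $$ (a,b)"
      unfolding sub_rows_index[OF F' aV ca a' b']
      using S2 F a' b' pa eq sub_rows_index[OF F aV ca a' b'] by (auto simp: replace_row_def)
  qed (insert S1 S2, auto simp: replace_row_def)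
qed

lemma cofactor_replace_row:
  assumes Y: "Y \<in> carrier_mat r r"
  shows "cofactor (replace_row Y p w) p b = cofactor Y p b"
  unfolding cofactor_def
  by (rule arg_cong[of _ _ "\<lambda>x. (-1)^(p+b) * det x"], rule eq_matI, insert Y,
      auto simp: mat_delete_def replace_row_def)

lemma det_replace_row_lap:
  assumes Y: "Y \<in> carrier_mat r r" and p: "p < r" and w: "w \<in> carrier_vec r"
  shows "det (replace_row Y p w) = (\<Sum>b<r. w $ b * cofactor Y p b)"
proof -
  have Y': "replace_row Y p w \<in> carrier_mat r r" by (rule replace_row_carrier[OF Y])
  show ?thesis unfolding laplace_expansion_row[OF Y' p] cofactor_replace_row[OF Y]
    by (rule sum.cong[OF refl], insert Y p, auto simp: replace_row_def)
qed

lemma cofactor_replace_col: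
  assumes Y: "Y \<in> carrier_mat r r"
  shows "cofactor (replace_col Y v b) i b = cofactor Y i b"
  unfolding cofactor_def
  by (rule arg_cong[of _ _ "\<lambda>x. (-1)^(i+b) * det x"], rule eq_matI, insert Y,
      auto simp: mat_delete_def replace_col_def)

lemma det_replace_col_lap:
  assumes Y: "Y \<in> carrier_mat r r" and b: "b < r" and v: "v \<in> carrier_vec r"
  shows "det (replace_col Y v b) = (\<Sum>i<r. v $ i * cofactor Y i b)"
proof -
  have Y': "replace_col Y v b \<in> carrier_mat r r" using Y by (auto simp: replace_col_def)
  show ?thesis unfolding laplace_expansion_column[OF Y' b] cofactor_replace_col[OF Y]
    by (rule sum.cong[OF refl], insert Y b, auto simp: replace_col_def)
qed

lemma sub_replace_col:
  assumes F: "F \<in> carrier_mat n m" and aV: "\<alpha> \<subseteq> {0..<n}" and ca: "card \<alpha> = r"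
  shows "submatrix (replace_col F v b) \<alpha> UNIV = replace_col (submatrix F \<alpha> UNIV) (vec r (\<lambda>a. v $ pick \<alpha> a)) b"
proof -
  have F': "replace_col F v b \<in> carrier_mat n m" using F by (auto simp: replace_col_def)
  have S1: "submatrix (replace_col F v b) \<alpha> UNIV \<in> carrier_mat r m" by (rule sub_rows_carrier[OF F' aV ca])
  have S2: "submatrix F \<alpha> UNIV \<in> carrier_mat r m" by (rule sub_rows_carrier[OF F aV ca])
  show ?thesis
  proof (rule eq_matI)
    fix a c assume a: "a < dim_row (replace_col (submatrix F \<alpha> UNIV) (vec r (\<lambda>a. v $ pick \<alpha> a)) b)"
      and c: "c < dim_col (replace_col (submatrix F \<alpha> UNIV) (vec r (\<lambda>a. v $ pick \<alpha> a)) b)"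
    hence a': "a < r" and c': "c < m" using S2 by (auto simp: replace_col_def)
    have pa: "pick \<alpha> a < n" by (rule pick_lt[OF aV ca a'])
    show "submatrix (replace_col F v b) \<alpha> UNIV $$ (a,c) = replace_col (submatrix F \<alpha> UNIV) (vec r (\<lambda>a. v $ pick \<alpha> a)) b $$ (a,c)"
      unfolding sub_rows_index[OF F' aV ca a' c']
      using S2 F a' c' pa sub_rows_index[OF F aV ca a' c'] by (auto simp: replace_col_def)
  qed (insert S1 S2, auto simp: replace_col_def)
qed

lemma replace_col_mult:
  fixes G F :: "'a::comm_ring_1 mat"
  assumes G: "G \<in> carrier_mat r n" and F: "F \<in> carrier_mat n r" and j: "j < n"
  shows "replace_col (G*F) (col G j) b = G * replace_col F (unit_vec n j) b"
proof (rule eq_matI)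
  fix a c assume a: "a < dim_row (G * replace_col F (unit_vec n j) b)" and c: "c < dim_col (G * replace_col F (unit_vec n j) b)"
  hence a': "a < r" and c': "c < r" using G F by (auto simp: replace_col_def)
  have cc: "col (replace_col F (unit_vec n j) b) c = (if c = b then unit_vec n j else col F c)"
    by (rule eq_vecI, insert F c', auto simp: replace_col_def)
  have "row G a \<bullet> unit_vec n j = G $$ (a,j)" using G a' j using carrier_matD[OF G] by (simp add: scalar_prod_right_unit[OF j])
  thus "replace_col (G*F) (col G j) b $$ (a,c) = (G * replace_col F (unit_vec n j) b) $$ (a,c)"
    using G F a' c' j cc by (auto simp: replace_col_def)
qed (insert G F, auto simp: replace_col_def)


lemma finite_Irn: "finite (Irn r n)" unfolding Irn_def by (rule finite_subset[of _ "Pow {0..<n}"], auto)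

lemma core_sum:
  fixes F G :: "complex mat"
  assumes F: "F \<in> carrier_mat n r" and G: "G \<in> carrier_mat r n" and j: "j < n" and w: "w \<in> carrier_vec r"
  shows "(\<Sum>\<alpha>\<in>Irnj r n j. det (submatrix (replace_row F j w) \<alpha> UNIV) * det (submatrix G UNIV \<alpha>))
    = (\<Sum>b<r. w $ b * det (replace_col (G*F) (col G j) b))"
proof -
  define p where "p \<alpha> = card {x\<in>\<alpha>. x < j}" for \<alpha> :: "nat set"
  let ?cof = "\<lambda>\<alpha> b. cofactor (submatrix F \<alpha> UNIV) (p \<alpha>) b"
  have props: "\<alpha> \<subseteq> {0..<n} \<and> card \<alpha> = r \<and> j \<in> \<alpha> \<and> p \<alpha> < r \<and> pick \<alpha> (p \<alpha>) = j" if a: "\<alpha> \<in> Irnj r n j" for \<alpha>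
  proof -
    have aV: "\<alpha> \<subseteq> {0..<n}" and ca: "card \<alpha> = r" and ja: "j \<in> \<alpha>" using a unfolding Irnj_def Irn_def by auto
    have fina: "finite \<alpha>" using aV finite_subset by blast
    have "{x\<in>\<alpha>. x < j} \<subset> \<alpha>" using ja by auto
    hence "p \<alpha> < r" unfolding p_def using psubset_card_mono[OF fina] ca by blast
    thus ?thesis using aV ca ja pick_card_in_set[OF ja] unfolding p_def by simp
  qed
  have L: "(\<Sum>\<alpha>\<in>Irnj r n j. det (submatrix (replace_row F j w) \<alpha> UNIV) * det (submatrix G UNIV \<alpha>))
    = (\<Sum>\<alpha>\<in>Irnj r n j. \<Sum>b<r. w $ b * (?cof \<alpha> b * det (submatrix G UNIV \<alpha>)))"
  proof (rule sum.cong[OF refl])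
    fix \<alpha> assume a: "\<alpha> \<in> Irnj r n j"
    note pr = props[OF a]
    have aV: "\<alpha> \<subseteq> {0..<n}" and ca: "card \<alpha> = r" and ja: "j \<in> \<alpha>" and pl: "p \<alpha> < r" using pr by auto
    have Fa: "submatrix F \<alpha> UNIV \<in> carrier_mat r r" by (rule sub_rows_carrier[OF F aV ca])
    have "det (submatrix (replace_row F j w) \<alpha> UNIV) = det (replace_row (submatrix F \<alpha> UNIV) (p \<alpha>) w)"
      unfolding sub_replace_row[OF F aV ca ja] p_def ..
    also have "\<dots> = (\<Sum>b<r. w $ b * ?cof \<alpha> b)" by (rule det_replace_row_lap[OF Fa pl w])
    finally show "det (submatrix (replace_row F j w) \<alpha> UNIV) * det (submatrix G UNIV \<alpha>) =
      (\<Sum>b<r. w $ b * (?cof \<alpha> b * det (submatrix G UNIV \<alpha>)))"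
      by (simp add: sum_distrib_right mult.assoc)
  qed
  have R: "det (replace_col (G*F) (col G j) b) = (\<Sum>\<alpha>\<in>Irnj r n j. ?cof \<alpha> b * det (submatrix G UNIV \<alpha>))"
    if b: "b < r" for b
  proof -
    let ?e = "unit_vec n j :: complex vec"
    have F': "replace_col F ?e b \<in> carrier_mat n r" using F by (auto simp: replace_col_def)
    have "det (replace_col (G*F) (col G j) b) = det (G * replace_col F ?e b)"
      unfolding replace_col_mult[OF G F j] ..
    also have "\<dots> = (\<Sum>\<alpha>\<in>Irn r n. det (submatrix G UNIV \<alpha>) * det (submatrix (replace_col F ?e b) \<alpha> UNIV))"
      by (rule cauchy_binet[OF F' G])
    also have "\<dots> = (\<Sum>\<alpha>\<in>Irn r n. if j \<in> \<alpha> then ?cof \<alpha> b * det (submatrix G UNIV \<alpha>) else 0)"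
    proof (rule sum.cong[OF refl])
      fix \<alpha> assume a: "\<alpha> \<in> Irn r n"
      have aV: "\<alpha> \<subseteq> {0..<n}" and ca: "card \<alpha> = r" using a unfolding Irn_def by auto
      have Fa: "submatrix F \<alpha> UNIV \<in> carrier_mat r r" by (rule sub_rows_carrier[OF F aV ca])
      have ent: "vec r (\<lambda>a. ?e $ pick \<alpha> a) $ i = (if pick \<alpha> i = j then 1 else 0)" if i: "i < r" for i
        using pick_lt[OF aV ca i] i j by simp
      have "det (submatrix (replace_col F ?e b) \<alpha> UNIV) = det (replace_col (submatrix F \<alpha> UNIV) (vec r (\<lambda>a. ?e $ pick \<alpha> a)) b)"
        unfolding sub_replace_col[OF F aV ca] ..
      also have "\<dots> = (\<Sum>i<r. vec r (\<lambda>a. ?e $ pick \<alpha> a) $ i * cofactor (submatrix F \<alpha> UNIV) i b)"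
        by (rule det_replace_col_lap[OF Fa b], simp)
      also have "\<dots> = (\<Sum>i<r. (if pick \<alpha> i = j then 1 else 0) * cofactor (submatrix F \<alpha> UNIV) i b)"
      proof (rule sum.cong[OF refl])
        fix i assume "i \<in> {..<r}" hence i: "i < r" by simp
        show "vec r (\<lambda>a. ?e $ pick \<alpha> a) $ i * cofactor (submatrix F \<alpha> UNIV) i b = (if pick \<alpha> i = j then 1 else 0) * cofactor (submatrix F \<alpha> UNIV) i b"
          unfolding ent[OF i] ..
      qed
      also have "\<dots> = (if j \<in> \<alpha> then ?cof \<alpha> b else 0)"
      proof (cases "j \<in> \<alpha>")
        case True
        hence aj: "\<alpha> \<in> Irnj r n j" using a unfolding Irnj_def by simp
        have pl: "p \<alpha> < r" and pj: "pick \<alpha> (p \<alpha>) = j" using props[OF aj] by auto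
        have "(\<Sum>i<r. (if pick \<alpha> i = j then 1 else 0) * cofactor (submatrix F \<alpha> UNIV) i b)
           = (\<Sum>i<r. if i = p \<alpha> then cofactor (submatrix F \<alpha> UNIV) i b else 0)"
        proof (rule sum.cong[OF refl])
          fix i assume "i \<in> {..<r}" hence i: "i < r" by simp
          have "(pick \<alpha> i = j) = (i = p \<alpha>)" using pick_inj[of i \<alpha> "p \<alpha>"] pj i pl ca by auto
          thus "(if pick \<alpha> i = j then 1 else 0) * cofactor (submatrix F \<alpha> UNIV) i b = (if i = p \<alpha> then cofactor (submatrix F \<alpha> UNIV) i b else 0)"
            by simp
        qed
        also have "\<dots> = ?cof \<alpha> b" using pl by simp
        finally show ?thesis using True by simp
      next
        case False
        have "pick \<alpha> i \<noteq> j" if i: "i < r" for i using pick_in_set[of i \<alpha>] i ca False by auto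
        thus ?thesis using False by simp
      qed
      finally show "det (submatrix G UNIV \<alpha>) * det (submatrix (replace_col F ?e b) \<alpha> UNIV) =
        (if j \<in> \<alpha> then ?cof \<alpha> b * det (submatrix G UNIV \<alpha>) else 0)" by simp
    qed
    also have "\<dots> = (\<Sum>\<alpha>\<in>Irnj r n j. ?cof \<alpha> b * det (submatrix G UNIV \<alpha>))"
      unfolding Irnj_def by (rule sum.inter_filter[OF finite_Irn, symmetric])
    finally show ?thesis .
  qed
  have "(\<Sum>b<r. w $ b * det (replace_col (G*F) (col G j) b)) = (\<Sum>b<r. w $ b * (\<Sum>\<alpha>\<in>Irnj r n j. ?cof \<alpha> b * det (submatrix G UNIV \<alpha>)))"
    by (rule sum.cong[OF refl], simp add: R)
  also have "\<dots> = (\<Sum>b<r. \<Sum>\<alpha>\<in>Irnj r n j. w $ b * (?cof \<alpha> b * det (submatrix G UNIV \<alpha>)))"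
    by (simp add: sum_distrib_left)
  also have "\<dots> = (\<Sum>\<alpha>\<in>Irnj r n j. \<Sum>b<r. w $ b * (?cof \<alpha> b * det (submatrix G UNIV \<alpha>)))"
    by (rule sum.swap)
  finally show ?thesis using L by simp
qed

lemma pminor_prod:
  fixes F G :: "complex mat"
  assumes F: "F \<in> carrier_mat n r" and G: "G \<in> carrier_mat r n" and aV: "\<alpha> \<subseteq> {0..<n}" and ca: "card \<alpha> = r"
  shows "pminor (F*G) \<alpha> = det (submatrix F \<alpha> UNIV) * det (submatrix G UNIV \<alpha>)"
  unfolding pminor_def submatrix_mult[OF F G]
  by (rule det_mult[OF sub_rows_carrier[OF F aV ca] sub_cols_carrier[OF G aV ca]])

lemma delta_prod:
  fixes F G :: "complex mat"
  assumes F: "F \<in> carrier_mat n r" and G: "G \<in> carrier_mat r n"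
  shows "(\<Sum>\<alpha>\<in>Irn r n. pminor (F*G) \<alpha>) = det (G*F)"
  unfolding cauchy_binet[OF F G]
  by (rule sum.cong[OF refl], insert F G, auto simp: Irn_def pminor_prod mult.commute)


lemma pow_add_mat: assumes A: "(A :: 'a::semiring_1 mat) \<in> carrier_mat n n"
  shows "A ^\<^sub>m (a + b) = A ^\<^sub>m a * A ^\<^sub>m b"
proof (induction b)
  case 0 thus ?case using A by (simp add: right_mult_one_mat[of _ n n])
next
  case (Suc b)
  have "A ^\<^sub>m (a + Suc b) = A ^\<^sub>m (a + b) * A" by simp
  also have "\<dots> = A ^\<^sub>m a * A ^\<^sub>m b * A" using Suc by simp
  also have "\<dots> = A ^\<^sub>m a * (A ^\<^sub>m b * A)" using A by (intro assoc_mult_mat[of _ n n _ n _ n]) auto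
  finally show ?case by simp
qed

lemma pow_commute_mat: assumes A: "(A :: 'a::comm_semiring_1 mat) \<in> carrier_mat n n" and X: "X \<in> carrier_mat n n"
  and c: "A * X = X * A" shows "A ^\<^sub>m m * X = X * A ^\<^sub>m m"
proof (induction m)
  case 0
  have "dim_row A = n" using A by auto
  thus ?case using right_mult_one_mat[OF X] left_mult_one_mat[OF X] by simp
next
  case (Suc m)
  have "A ^\<^sub>m Suc m * X = A ^\<^sub>m m * (A * X)" using A X by (simp add: assoc_mult_mat[of _ n n _ n _ n])
  also have "\<dots> = A ^\<^sub>m m * (X * A)" using c by simp
  also have "\<dots> = (A ^\<^sub>m m * X) * A" using A X by (simp add: assoc_mult_mat[of _ n n _ n _ n])
  also have "\<dots> = (X * A ^\<^sub>m m) * A" using Suc by simp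
  also have "\<dots> = X * A ^\<^sub>m Suc m" using A X by (simp add: assoc_mult_mat[of _ n n _ n _ n])
  finally show ?case .
qed







lemma mat_vec_zero: assumes "(M :: 'a::comm_ring_1 mat) \<in> carrier_mat a b" shows "M *\<^sub>v 0\<^sub>v b = 0\<^sub>v a"
  by (rule eq_vecI, insert assms, auto)

lemma key:
  fixes A B X :: "complex mat"
  assumes A: "A \<in> carrier_mat n n" and B: "B \<in> carrier_mat n n" and X: "X \<in> carrier_mat n n"
    and d1: "A ^\<^sub>m (k+1) * X = A ^\<^sub>m k" and d2: "X * A * X = X" and d3: "A * X = X * A"
    and i: "i < n" and j: "j < n"
  defines "r \<equiv> vec_space.rank n (A ^\<^sub>m k)"
  defines "\<Delta> \<equiv> (\<Sum>\<alpha>\<in>Irn r n. pminor (A ^\<^sub>m (k+1)) \<alpha>)"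
  shows "\<Delta> \<noteq> 0 \<and> (\<forall>s. (\<Sum>\<alpha>\<in>Irnj r n j. pminor (replace_row (A ^\<^sub>m (k+1)) j (row (B * A ^\<^sub>m (k+s)) i)) \<alpha>)
      = \<Delta> * (B * A ^\<^sub>m s * X) $$ (i,j))"
proof -
  have Ak: "A ^\<^sub>m k \<in> carrier_mat n n" by (rule pow_carrier_mat[OF A])
  obtain F G0 E where F: "F \<in> carrier_mat n r" and G0: "G0 \<in> carrier_mat r n" and E: "E \<in> carrier_mat n r"
    and FG0: "A ^\<^sub>m k = F * G0" and FE: "F = A ^\<^sub>m k * E" and inj: "\<forall>w\<in>carrier_vec r. F *\<^sub>v w = 0\<^sub>v n \<longrightarrow> w = 0\<^sub>v r"
    using rank_factor[OF Ak] unfolding r_def by blast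
  define G where "G = G0 * A"
  have G: "G \<in> carrier_mat r n" unfolding G_def by (rule mult_carrier_mat[OF G0 A])
  define M where "M = A ^\<^sub>m (k+1)"
  have Mc: "M \<in> carrier_mat n n" unfolding M_def by (rule pow_carrier_mat[OF A])
  have MFG: "M = F * G"
  proof -
    have "M = A ^\<^sub>m k * A" unfolding M_def by simp
    also have "\<dots> = F * G0 * A" using FG0 by simp
    also have "\<dots> = F * G" unfolding G_def by (rule assoc_mult_mat[OF F G0 A])
    finally show ?thesis .
  qed
  define C where "C = G * F"
  have C: "C \<in> carrier_mat r r" unfolding C_def by (rule mult_carrier_mat[OF G F])
  have Dt: "\<Delta> = det C" unfolding \<Delta>_def C_def using delta_prod[OF F G] MFG unfolding M_def by simp
  have P2: "A ^\<^sub>m m * X = X * A ^\<^sub>m m" for m by (rule pow_commute_mat[OF A X d3])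
  have XM: "X * M = A ^\<^sub>m k" unfolding M_def using P2[of "k+1"] d1 by simp
  have dX: "dim_row X = n" using X by auto
  have Q2: "A ^\<^sub>m k = X ^\<^sub>m m * A ^\<^sub>m (k+m)" for m
  proof (induction m)
    case 0 thus ?case using dX left_mult_one_mat[OF Ak] by simp
  next
    case (Suc m)
    have Xm: "X ^\<^sub>m m \<in> carrier_mat n n" using X by simp
    have Akm: "A ^\<^sub>m (k+m) \<in> carrier_mat n n" using A by simp
    have e1: "X * A ^\<^sub>m (k + Suc m) = A ^\<^sub>m (k+m)"
    proof -
      have "A ^\<^sub>m (k + Suc m) = A ^\<^sub>m ((k+1) + m)" by simp
      also have "\<dots> = M * A ^\<^sub>m m" unfolding M_def by (rule pow_add_mat[OF A])
      finally have "X * A ^\<^sub>m (k + Suc m) = X * (M * A ^\<^sub>m m)" by simp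
      also have "\<dots> = X * M * A ^\<^sub>m m" using X Mc A by (simp add: assoc_mult_mat[of X n n M n "A ^\<^sub>m m" n])
      also have "\<dots> = A ^\<^sub>m (k+m)" unfolding XM by (rule pow_add_mat[OF A, symmetric])
      finally show ?thesis .
    qed
    have "X ^\<^sub>m Suc m * A ^\<^sub>m (k + Suc m) = (X ^\<^sub>m m * X) * A ^\<^sub>m (k + Suc m)" by simp
    also have "\<dots> = X ^\<^sub>m m * (X * A ^\<^sub>m (k + Suc m))" by (rule assoc_mult_mat[OF Xm X pow_carrier_mat[OF A]])
    also have "\<dots> = A ^\<^sub>m k" unfolding e1 using Suc by simp
    finally show ?case by simp
  qed
  have XXA: "X = X * X * A"
  proof -
    have "X = X * A * X" using d2 by simp
    also have "\<dots> = X * (A * X)" by (rule assoc_mult_mat[OF X A X])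
    also have "\<dots> = X * (X * A)" using d3 by simp
    also have "\<dots> = X * X * A" by (rule assoc_mult_mat[OF X X A, symmetric])
    finally show ?thesis .
  qed
  have Q1: "X = X ^\<^sub>m (m+1) * A ^\<^sub>m m" for m
  proof (induction m)
    case 0
    have "dim_row A = n" using A by auto
    thus ?case using dX X left_mult_one_mat[OF X] right_mult_one_mat[OF X] by simp
  next
    case (Suc m)
    have Y: "X ^\<^sub>m (m+1) \<in> carrier_mat n n" by (rule pow_carrier_mat[OF X])
    have Am: "A ^\<^sub>m m \<in> carrier_mat n n" by (rule pow_carrier_mat[OF A])
    have AmA: "A ^\<^sub>m m * A \<in> carrier_mat n n" by (rule mult_carrier_mat[OF Am A])
    have XA: "X * A \<in> carrier_mat n n" by (rule mult_carrier_mat[OF X A])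
    have "X ^\<^sub>m (Suc m + 1) * A ^\<^sub>m Suc m = (X ^\<^sub>m (m+1) * X) * (A ^\<^sub>m m * A)" by simp
    also have "\<dots> = X ^\<^sub>m (m+1) * (X * (A ^\<^sub>m m * A))" by (rule assoc_mult_mat[OF Y X AmA])
    also have "X * (A ^\<^sub>m m * A) = (X * A ^\<^sub>m m) * A" by (rule assoc_mult_mat[OF X Am A, symmetric])
    also have "\<dots> = (A ^\<^sub>m m * X) * A" using P2[of m] by simp
    also have "\<dots> = A ^\<^sub>m m * (X * A)" by (rule assoc_mult_mat[OF Am X A])
    also have "X ^\<^sub>m (m+1) * (A ^\<^sub>m m * (X * A)) = (X ^\<^sub>m (m+1) * A ^\<^sub>m m) * (X * A)"
      by (rule assoc_mult_mat[OF Y Am XA, symmetric])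
    also have "\<dots> = X * (X * A)" using Suc by simp
    also have "\<dots> = X * X * A" by (rule assoc_mult_mat[OF X X A, symmetric])
    also have "\<dots> = X" using XXA by simp
    finally show ?case by simp
  qed
  have MF: "M * F = F * C" unfolding MFG C_def using F G by (simp add: assoc_mult_mat[of F n r G n F r])
  have FC: "F = X ^\<^sub>m (k+1) * (F * C)"
  proof -
    have Xk: "X ^\<^sub>m (k+1) \<in> carrier_mat n n" by (rule pow_carrier_mat[OF X])
    have "F = A ^\<^sub>m k * E" by (rule FE)
    also have "\<dots> = (X ^\<^sub>m (k+1) * A ^\<^sub>m (k + (k+1))) * E" using Q2[of "k+1"] by simp
    also have "A ^\<^sub>m (k + (k+1)) = M * A ^\<^sub>m k" unfolding M_def using pow_add_mat[OF A, of "k+1" k] by (simp add: add.commute)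
    also have "(X ^\<^sub>m (k+1) * (M * A ^\<^sub>m k)) * E = X ^\<^sub>m (k+1) * (M * (A ^\<^sub>m k * E))"
      using Xk Mc Ak E by (simp add: assoc_mult_mat[of _ n n _ n _ r] assoc_mult_mat[of _ n n _ n _ n])
    also have "\<dots> = X ^\<^sub>m (k+1) * (F * C)" unfolding FE[symmetric] MF ..
    finally show ?thesis .
  qed
  have dC: "det C \<noteq> 0"
  proof
    assume "det C = 0"
    then obtain v where v: "v \<in> carrier_vec r" and v0: "v \<noteq> 0\<^sub>v r" and Cv: "C *\<^sub>v v = 0\<^sub>v r"
      using det_0_iff_vec_prod_zero_field[OF C] by auto
    have Xk: "X ^\<^sub>m (k+1) \<in> carrier_mat n n" by (rule pow_carrier_mat[OF X])
    have "F *\<^sub>v v = (X ^\<^sub>m (k+1) * (F * C)) *\<^sub>v v" using FC by simp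
    also have "\<dots> = X ^\<^sub>m (k+1) *\<^sub>v (F *\<^sub>v (C *\<^sub>v v))"
      using Xk F C v by (simp add: assoc_mult_mat_vec[of _ n n _ r v] assoc_mult_mat_vec[of F n r C r v])
    also have "\<dots> = 0\<^sub>v n" unfolding Cv mat_vec_zero[OF F] mat_vec_zero[OF Xk] ..
    finally have "v = 0\<^sub>v r" using inj v by simp
    thus False using v0 by simp
  qed
  have "C \<in> Units (ring_mat TYPE(complex) r ())" by (rule det_non_zero_imp_unit[OF C dC])
  then obtain Ci where Ci: "Ci \<in> carrier_mat r r" and CCi: "C * Ci = 1\<^sub>m r"
    unfolding Units_def ring_mat_def by auto
  define V where "V = Ci * G"
  have Vc: "V \<in> carrier_mat r n" unfolding V_def by (rule mult_carrier_mat[OF Ci G])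
  have XFV: "X * (F * V) = X"
  proof -
    define Z where "Z = X ^\<^sub>m (k+2)"
    have Z: "Z \<in> carrier_mat n n" unfolding Z_def by (rule pow_carrier_mat[OF X])
    have XZ: "X = Z * M" unfolding Z_def M_def using Q1[of "k+1"] by simp
    have MFV: "M * (F * V) = M"
    proof -
      have "M * (F * V) = (M * F) * V" using Mc F Vc by (simp add: assoc_mult_mat[of M n n F r V n])
      also have "\<dots> = (F * C) * (Ci * G)" unfolding MF V_def ..
      also have "\<dots> = F * ((C * Ci) * G)" using F C Ci G
        by (simp add: assoc_mult_mat[of F n r C r _ n] assoc_mult_mat[of C r r Ci r G n])
      also have "\<dots> = F * G" unfolding CCi using left_mult_one_mat[OF G] by simp
      finally show ?thesis using MFG by simp
    qed
    have "X * (F * V) = Z * (M * (F * V))" unfolding XZ using Z Mc F Vc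
      by (simp add: assoc_mult_mat[of Z n n M n _ n])
    also have "\<dots> = X" unfolding MFV XZ ..
    finally show ?thesis .
  qed
  have main: "(\<Sum>\<alpha>\<in>Irnj r n j. pminor (replace_row (A ^\<^sub>m (k+1)) j (row (B * A ^\<^sub>m (k+s)) i)) \<alpha>)
      = \<Delta> * (B * A ^\<^sub>m s * X) $$ (i,j)" for s
  proof -
    have As: "A ^\<^sub>m s \<in> carrier_mat n n" by (rule pow_carrier_mat[OF A])
    have BAs: "B * A ^\<^sub>m s \<in> carrier_mat n n" by (rule mult_carrier_mat[OF B As])
    define U where "U = B * A ^\<^sub>m s * X * F"
    have U: "U \<in> carrier_mat n r" unfolding U_def by (rule mult_carrier_mat[OF mult_carrier_mat[OF BAs X] F])
    have BAU: "B * A ^\<^sub>m (k+s) = U * G"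
    proof -
      have "A ^\<^sub>m (k+s) = A ^\<^sub>m s * A ^\<^sub>m k" using pow_add_mat[OF A, of s k] by (simp add: add.commute)
      also have "\<dots> = A ^\<^sub>m s * (X * (F * G))" unfolding XM[symmetric] MFG ..
      finally have "B * A ^\<^sub>m (k+s) = B * (A ^\<^sub>m s * (X * (F * G)))" by simp
      also have "\<dots> = (B * A ^\<^sub>m s) * (X * (F * G))" using B As X F G
        by (simp add: assoc_mult_mat[of B n n _ n _ n])
      also have "\<dots> = ((B * A ^\<^sub>m s) * X) * (F * G)"
        by (rule assoc_mult_mat[OF BAs X mult_carrier_mat[OF F G], symmetric])
      also have "\<dots> = U * G" unfolding U_def
        by (rule assoc_mult_mat[OF mult_carrier_mat[OF BAs X] F G, symmetric])
      finally show ?thesis .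
    qed
    define w where "w = row U i"
    have w: "w \<in> carrier_vec r" unfolding w_def using U by auto
    have F': "replace_row F j w \<in> carrier_mat n r" by (rule replace_row_carrier[OF F])
    have "(\<Sum>\<alpha>\<in>Irnj r n j. pminor (replace_row (A ^\<^sub>m (k+1)) j (row (B * A ^\<^sub>m (k+s)) i)) \<alpha>)
      = (\<Sum>\<alpha>\<in>Irnj r n j. pminor (replace_row F j w * G) \<alpha>)"
      unfolding M_def[symmetric] MFG BAU w_def replace_row_mult[OF F G U i] ..
    also have "\<dots> = (\<Sum>\<alpha>\<in>Irnj r n j. det (submatrix (replace_row F j w) \<alpha> UNIV) * det (submatrix G UNIV \<alpha>))"
    proof (rule sum.cong[OF refl])
      fix \<alpha> assume "\<alpha> \<in> Irnj r n j"
      hence aV: "\<alpha> \<subseteq> {0..<n}" and ca: "card \<alpha> = r" unfolding Irnj_def Irn_def by auto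
      show "pminor (replace_row F j w * G) \<alpha> = det (submatrix (replace_row F j w) \<alpha> UNIV) * det (submatrix G UNIV \<alpha>)"
        by (rule pminor_prod[OF F' G aV ca])
    qed
    also have "\<dots> = (\<Sum>b<r. w $ b * det (replace_col C (col G j) b))"
      unfolding C_def by (rule core_sum[OF F G j w])
    also have "\<dots> = (\<Sum>b<r. w $ b * ((Ci *\<^sub>v col G j) $ b * det C))"
    proof (rule sum.cong[OF refl])
      fix b assume "b \<in> {..<r}" hence b: "b < r" by simp
      have cG: "col G j \<in> carrier_vec r" using G unfolding carrier_vec_def by simp
      have x: "Ci *\<^sub>v col G j \<in> carrier_vec r" by (rule mult_mat_vec_carrier[OF Ci cG])
      have "C *\<^sub>v (Ci *\<^sub>v col G j) = (C * Ci) *\<^sub>v col G j"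
        by (rule assoc_mult_mat_vec[OF C Ci cG, symmetric])
      also have "\<dots> = col G j" unfolding CCi by (rule one_mult_mat_vec[OF cG])
      finally have "col G j = C *\<^sub>v (Ci *\<^sub>v col G j)" by simp
      hence "det (replace_col C (col G j) b) = (Ci *\<^sub>v col G j) $ b * det C"
        using cramer_lemma_mat[OF C x b] by simp
      thus "w $ b * det (replace_col C (col G j) b) = w $ b * ((Ci *\<^sub>v col G j) $ b * det C)" by simp
    qed
    also have "\<dots> = det C * (w \<bullet> (Ci *\<^sub>v col G j))"
      unfolding scalar_prod_def using Ci G by (simp add: sum_distrib_left atLeast0LessThan ac_simps)
    also have "w \<bullet> (Ci *\<^sub>v col G j) = (U * V) $$ (i,j)"
    proof -
      have "(U * V) $$ (i,j) = row U i \<bullet> col V j" using U Vc i j by simp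
      also have "col V j = Ci *\<^sub>v col G j" unfolding V_def by (rule col_mult2[OF Ci G j])
      finally show ?thesis unfolding w_def by simp
    qed
    also have "U * V = B * A ^\<^sub>m s * X"
    proof -
      have "U * V = ((B * A ^\<^sub>m s) * X) * (F * V)" unfolding U_def
        by (rule assoc_mult_mat[OF mult_carrier_mat[OF BAs X] F Vc])
      also have "\<dots> = (B * A ^\<^sub>m s) * (X * (F * V))"
        by (rule assoc_mult_mat[OF BAs X mult_carrier_mat[OF F Vc]])
      finally have "U * V = (B * A ^\<^sub>m s) * (X * (F * V))" .
      thus ?thesis unfolding XFV by simp
    qed
    finally show ?thesis unfolding Dt by simp
  qed
  show ?thesis using dC Dt main by simp
qed



theorem theorem5p3:
  fixes n :: nat and A B AD :: "complex mat" and t :: complex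
  assumes "A \<in> carrier_mat n n" and "B \<in> carrier_mat n n"
    and "is_drazin_inv n A AD"
  defines "k \<equiv> mat_ind n A"
  defines "r \<equiv> crank n (A ^\<^sub>m k)"
  defines "\<Delta> \<equiv> (\<Sum>\<alpha>\<in>Irn r n. pminor (A ^\<^sub>m (k+1)) \<alpha>)"
  defines "N \<equiv> (\<lambda>i j l. \<Sum>\<alpha>\<in>Irnj r n j.
              pminor (replace_row (A ^\<^sub>m (k+1)) j (row (B * A ^\<^sub>m l) i)) \<alpha>)"
  shows "\<forall>i<n. \<forall>j<n. Xsol n k A B AD t $$ (i,j) =
           N i j k / \<Delta> +
           (\<Sum>s=1..k. ((-1)^(s-1) / of_nat (fact s)) *
              ((B * A ^\<^sub>m (s-1)) $$ (i,j) - N i j (k+s) / \<Delta>) * t^s)"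
proof (intro allI impI)
  fix i j assume i: "i < n" and j: "j < n"
  have X: "AD \<in> carrier_mat n n" and d1: "A ^\<^sub>m (k+1) * AD = A ^\<^sub>m k"
    and d2: "AD * A * AD = AD" and d3: "A * AD = AD * A"
    using assms(3) unfolding is_drazin_inv_def k_def Let_def by auto
  have K: "\<Delta> \<noteq> 0 \<and> (\<forall>s. N i j (k+s) = \<Delta> * (B * A ^\<^sub>m s * AD) $$ (i,j))"
    using key[OF assms(1) assms(2) X d1 d2 d3 i j] unfolding N_def \<Delta>_def r_def crank_def by simp
  have e: "N i j (k+s) / \<Delta> = (B * A ^\<^sub>m s * AD) $$ (i,j)" for s using K by simp
  have "B * A ^\<^sub>m 0 * AD = B * AD" using assms(2) right_mult_one_mat[OF assms(2)] assms(1) by simp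
  hence e0: "N i j k / \<Delta> = (B * AD) $$ (i,j)" using e[of 0] by simp
  show "Xsol n k A B AD t $$ (i,j) =
           N i j k / \<Delta> +
           (\<Sum>s=1..k. ((-1)^(s-1) / of_nat (fact s)) *
              ((B * A ^\<^sub>m (s-1)) $$ (i,j) - N i j (k+s) / \<Delta>) * t^s)"
    unfolding Xsol_def using i j e e0 by simp
qed

end
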